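(* Let $G=(V,E,\gamma,c)$ be a typed DAG task executed on a platform with $M_s\ge1$ cores of each type $s\in S$ under any work-conserving scheduling algorithm, and let $R(G)$ be its worst-case response time. Then \[ R(G)\le \max_{\pi}\widetilde R(\pi),\qquad \widetilde R(\pi)=len(\pi)+\sum_{s\in S}\sum_{v\in\mathrm{ivs}(\pi,s)}\frac{c(v)}{M_s}, \] where the maximum ranges over the paths $\pi$ of $G$.
   Context: A typed DAG task is $G=(V,E,\gamma,c)$ where $(V,E)$ is a finite directed acyclic graph with a unique source $v_{src}$ and a unique sink $v_{snk}$, $S$ is a finite set of core types, $\gamma:V\to S$ gives the type of each vertex, and $c:V\to\mathbb{R}_{\ge0}$ gives the WCET of each vertex. The platform has $M_s\ge1$ cores of type $s$. $\mathrm{ans}(u)$, $\mathrm{des}(u)$ denote ancestors and descendants of $u$. For a path $\pi$, $len(\pi)=\sum_{u\in\pi}c(u)$. For $v\in V$, $\mathrm{par}(v)=\{u\in V: u\ne v,\ \gamma(u)=\gamma(v),\ u\notin \mathrm{ans}(v)\cup\mathrm{des}(v)\}$. For a path $\pi=(\tau_1,\dots,\tau_k)$ and $s\in S$, $\mathrm{ivs}(\pi,s)=\bigcup_{i:\gamma(\tau_i)=s}\mathrm{par}(\tau_i)$. Runtime model: a vertex becomes eligible when all its predecessors have finished (the source at time $0$); a vertex $v$ may only execute on cores of type $\gamma(v)$, one core at a time, for a total of at most $c(v)$ time units (possibly less). Scheduling is work-conserving: an eligible unfinished vertex of type $s$ must be executing whenever some core of type $s$ is available. The response time of an execution sequence is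 the finish time of $v_{snk}$; $R(G)$ is the maximum (supremum) response time over all possible execution sequences. *)

theory Defs
  imports "HOL-Analysis.Analysis"
begin

definition typed_dag_task ::
  "'v set \<Rightarrow> ('v \<times> 'v) set \<Rightarrow> 's set \<Rightarrow> ('v \<Rightarrow> 's) \<Rightarrow> ('v \<Rightarrow> real) \<Rightarrow> 'v \<Rightarrow> 'v \<Rightarrow> bool" where
  "typed_dag_task V E S \<gamma> c src snk \<longleftrightarrow>
     finite V \<and> E \<subseteq> V \<times> V \<and> acyclic E \<and> finite S \<and> \<gamma> ` V \<subseteq> S \<and>
     (\<forall>v\<in>V. c v \<ge> 0) \<and>
     src \<in> V \<and> snk \<in> V \<and>
     (\<forall>v\<in>V. (\<forall>u. (u, v) \<notin> E) \<longleftrightarrow> v = src) \<and>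
     (\<forall>v\<in>V. (\<forall>w. (v, w) \<notin> E) \<longleftrightarrow> v = snk)"

definition ans :: "('v \<times> 'v) set \<Rightarrow> 'v \<Rightarrow> 'v set" where
  "ans E v = {u. (u, v) \<in> E\<^sup>+}"

definition des :: "('v \<times> 'v) set \<Rightarrow> 'v \<Rightarrow> 'v set" where
  "des E v = {w. (v, w) \<in> E\<^sup>+}"

definition par :: "'v set \<Rightarrow> ('v \<times> 'v) set \<Rightarrow> ('v \<Rightarrow> 's) \<Rightarrow> 'v \<Rightarrow> 'v set" where
  "par V E \<gamma> v = {u \<in> V. u \<noteq> v \<and> \<gamma> u = \<gamma> v \<and> u \<notin> ans E v \<union> des E v}"

definition is_path :: "'v set \<Rightarrow> ('v \<times> 'v) set \<Rightarrow> 'v list \<Rightarrow> bool" where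
  "is_path V E \<pi> \<longleftrightarrow> \<pi> \<noteq> [] \<and> set \<pi> \<subseteq> V \<and>
     (\<forall>i. Suc i < length \<pi> \<longrightarrow> (\<pi> ! i, \<pi> ! Suc i) \<in> E)"

definition paths :: "'v set \<Rightarrow> ('v \<times> 'v) set \<Rightarrow> 'v list set" where
  "paths V E = {\<pi>. is_path V E \<pi>}"

definition len :: "('v \<Rightarrow> real) \<Rightarrow> 'v list \<Rightarrow> real" where
  "len c \<pi> = (\<Sum>u\<leftarrow>\<pi>. c u)"

definition ivs :: "'v set \<Rightarrow> ('v \<times> 'v) set \<Rightarrow> ('v \<Rightarrow> 's) \<Rightarrow> 'v list \<Rightarrow> 's \<Rightarrow> 'v set" where
  "ivs V E \<gamma> \<pi> s = (\<Union>i\<in>{i. i < length \<pi> \<and> \<gamma> (\<pi> ! i) = s}. par V E \<gamma> (\<pi> ! i))"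

definition R_tilde ::
  "'v set \<Rightarrow> ('v \<times> 'v) set \<Rightarrow> 's set \<Rightarrow> ('v \<Rightarrow> 's) \<Rightarrow> ('v \<Rightarrow> real) \<Rightarrow> ('s \<Rightarrow> nat) \<Rightarrow> 'v list \<Rightarrow> real" where
  "R_tilde V E S \<gamma> c M \<pi> =
     len c \<pi> + (\<Sum>s\<in>S. \<Sum>v\<in>ivs V E \<gamma> \<pi> s. c v / real (M s))"

text \<open>An execution sequence is given by
  run t  : the set of vertices executing at time t (each on one core),
  e v    : the actual execution time of v (0 \<le> e v \<le> c v),
  f v    : the finish time of v.\<close>

definition work :: "(real \<Rightarrow> 'v set) \<Rightarrow> 'v \<Rightarrow> real \<Rightarrow> real" where
  "work run v t = measure lborel ({\<tau>. v \<in> run \<tau>} \<inter> {0..<t})"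

definition eligible :: "('v \<times> 'v) set \<Rightarrow> ('v \<Rightarrow> real) \<Rightarrow> real \<Rightarrow> 'v \<Rightarrow> bool" where
  "eligible E f t v \<longleftrightarrow> 0 \<le> t \<and> (\<forall>u. (u, v) \<in> E \<longrightarrow> f u \<le> t)"

definition busy :: "(real \<Rightarrow> 'v set) \<Rightarrow> ('v \<Rightarrow> 's) \<Rightarrow> real \<Rightarrow> 's \<Rightarrow> nat" where
  "busy run \<gamma> t s = card {u \<in> run t. \<gamma> u = s}"

definition exec_seq ::
  "'v set \<Rightarrow> ('v \<times> 'v) set \<Rightarrow> ('v \<Rightarrow> 's) \<Rightarrow> ('v \<Rightarrow> real) \<Rightarrow> ('s \<Rightarrow> nat)
   \<Rightarrow> (real \<Rightarrow> 'v set) \<Rightarrow> ('v \<Rightarrow> real) \<Rightarrow> ('v \<Rightarrow> real) \<Rightarrow> bool" where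
  "exec_seq V E \<gamma> c M run e f \<longleftrightarrow>
     \<comment> \<open>actual execution times\<close>
     (\<forall>v\<in>V. 0 \<le> e v \<and> e v \<le> c v) \<and>
     \<comment> \<open>measurability of execution intervals\<close>
     (\<forall>v. {\<tau>. v \<in> run \<tau>} \<in> sets lborel) \<and>
     \<comment> \<open>only eligible, unfinished vertices of the task execute\<close>
     (\<forall>t v. v \<in> run t \<longrightarrow> v \<in> V \<and> eligible E f t v \<and> t < f v) \<and>
     \<comment> \<open>at most M s cores of type s are in use (a vertex runs on one core of its own type)\<close>
     (\<forall>t s. busy run \<gamma> t s \<le> M s) \<and>
     \<comment> \<open>finishing: v finishes once eligible and its work reaches e v, not earlier\<close>
     (\<forall>v\<in>V. eligible E f (f v) v \<and> work run v (f v) = e v \<and>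
        (\<forall>t. eligible E f t v \<and> t < f v \<longrightarrow> work run v t < e v)) \<and>
     \<comment> \<open>work-conserving\<close>
     (\<forall>t v. v \<in> V \<and> eligible E f t v \<and> t < f v \<longrightarrow>
        v \<in> run t \<or> busy run \<gamma> t (\<gamma> v) = M (\<gamma> v))"

end

theory Submission
  imports Defs
begin

lemma path_trancl:
  assumes "is_path V E \<pi>" "j < length \<pi>" "i < j"
  shows "(\<pi>!i, \<pi>!j) \<in> E\<^sup>+"
  using assms(2,3)
proof (induction j)
  case 0 then show ?case by simp
next
  case (Suc j)
  have e: "(\<pi>!j, \<pi>!Suc j) \<in> E" using assms(1) Suc.prems unfolding is_path_def by blast
  show ?case
  proof (cases "i = j")
    case True then show ?thesis using e by auto
  next
    case False
    then have "(\<pi>!i, \<pi>!j) \<in> E\<^sup>+" using Suc by simp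
    then show ?thesis using e by (meson trancl_into_trancl)
  qed
qed

lemma path_distinct:
  assumes "acyclic E" "is_path V E \<pi>"
  shows "distinct \<pi>"
  unfolding distinct_conv_nth
proof (intro allI impI)
  fix i j assume h: "i < length \<pi>" "j < length \<pi>" "i \<noteq> j"
  show "\<pi>!i \<noteq> \<pi>!j"
  proof
    assume eq: "\<pi>!i = \<pi>!j"
    show False
    proof (cases "i < j")
      case True
      then have "(\<pi>!i, \<pi>!j) \<in> E\<^sup>+" using path_trancl assms(2) h by blast
      then show False using assms(1) eq unfolding acyclic_def by metis
    next
      case False
      then have "j < i" using h by simp
      then have "(\<pi>!j, \<pi>!i) \<in> E\<^sup>+" using path_trancl assms(2) h by blast
      then show False using assms(1) eq unfolding acyclic_def by metis
    qed
  qed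
qed

lemma paths_finite:
  assumes "finite V" "acyclic E"
  shows "finite (paths V E)"
proof -
  have "paths V E \<subseteq> {xs. set xs \<subseteq> V \<and> length xs \<le> card V}"
  proof
    fix \<pi> assume "\<pi> \<in> paths V E"
    then have p: "is_path V E \<pi>" by (simp add: paths_def)
    then have d: "distinct \<pi>" using path_distinct assms(2) by blast
    have s: "set \<pi> \<subseteq> V" using p by (simp add: is_path_def)
    have "length \<pi> = card (set \<pi>)" using d by (simp add: distinct_card)
    also have "\<dots> \<le> card V" using s assms(1) by (simp add: card_mono)
    finally show "\<pi> \<in> {xs. set xs \<subseteq> V \<and> length xs \<le> card V}" using s by simp
  qed
  moreover have "finite {xs. set xs \<subseteq> V \<and> length xs \<le> card V}"
    using finite_lists_length_le[OF assms(1)] by simp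
  ultimately show ?thesis by (rule finite_subset)
qed

lemma path_snoc:
  assumes "is_path V E \<pi>" "(last \<pi>, v) \<in> E" "v \<in> V"
  shows "is_path V E (\<pi> @ [v])"
  unfolding is_path_def
proof (intro conjI allI impI)
  show "\<pi> @ [v] \<noteq> []" by simp
  show "set (\<pi> @ [v]) \<subseteq> V" using assms by (auto simp: is_path_def)
  fix i assume i: "Suc i < length (\<pi> @ [v])"
  show "((\<pi> @ [v]) ! i, (\<pi> @ [v]) ! Suc i) \<in> E"
  proof (cases "Suc i < length \<pi>")
    case True then show ?thesis using assms(1) by (simp add: nth_append is_path_def)
  next
    case False
    then have "i = length \<pi> - 1" "\<pi> \<noteq> []" using i assms(1) by (auto simp: is_path_def)
    then show ?thesis using assms(2) by (auto simp: nth_append last_conv_nth)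
  qed
qed

theorem theorem3:
  fixes V :: "'v set" and E :: "('v \<times> 'v) set" and S :: "'s set"
    and \<gamma> :: "'v \<Rightarrow> 's" and c :: "'v \<Rightarrow> real" and src snk :: 'v
    and M :: "'s \<Rightarrow> nat"
    and run :: "real \<Rightarrow> 'v set" and e f :: "'v \<Rightarrow> real"
  assumes "typed_dag_task V E S \<gamma> c src snk"
    and "\<forall>s\<in>S. M s \<ge> 1"
    and "exec_seq V E \<gamma> c M run e f"
  shows "f snk \<le> Max (R_tilde V E S \<gamma> c M ` paths V E)"
proof -
  have fV: "finite V" and EV: "E \<subseteq> V \<times> V" and acyc: "acyclic E" and fS: "finite S"
    and gS: "\<gamma> ` V \<subseteq> S" and cnn: "\<forall>v\<in>V. c v \<ge> 0" and snkV: "snk \<in> V"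
    using assms(1) unfolding typed_dag_task_def by auto
  note ex = assms(3)[unfolded exec_seq_def]
  have e_le: "\<And>v. v \<in> V \<Longrightarrow> e v \<le> c v" using ex by auto
  have Rmeas: "\<And>v. {\<tau>. v \<in> run \<tau>} \<in> sets lborel" using ex by auto
  have runI: "\<And>t v. v \<in> run t \<Longrightarrow> v \<in> V \<and> eligible E f t v \<and> t < f v" using ex by auto
  have fin: "\<And>v. v \<in> V \<Longrightarrow> eligible E f (f v) v \<and> work run v (f v) = e v" using ex by auto
  have wc: "\<And>t v. v \<in> V \<Longrightarrow> eligible E f t v \<Longrightarrow> t < f v \<Longrightarrow> v \<in> run t \<or> busy run \<gamma> t (\<gamma> v) = M (\<gamma> v)"
    using ex by auto
  have edge_mono: "\<And>u v. (u,v) \<in> E \<Longrightarrow> f u \<le> f v"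
  proof -
    fix u v assume uv: "(u,v) \<in> E"
    then have "v \<in> V" using EV by auto
    then have "eligible E f (f v) v" using fin by auto
    then show "f u \<le> f v" using uv unfolding eligible_def by auto
  qed
  have rt_mono: "\<And>u v. (u,v) \<in> E\<^sup>* \<Longrightarrow> f u \<le> f v"
  proof -
    fix u v assume "(u,v) \<in> E\<^sup>*"
    then show "f u \<le> f v"
      by (induction rule: rtrancl_induct) (simp, meson edge_mono order_trans)
  qed
  have in_par: "\<And>t v u. v \<in> V \<Longrightarrow> eligible E f t v \<Longrightarrow> t < f v \<Longrightarrow> u \<in> run t \<Longrightarrow> u \<noteq> v \<Longrightarrow> \<gamma> u = \<gamma> v \<Longrightarrow> u \<in> par V E \<gamma> v"
  proof -
    fix t v u assume h: "v \<in> V" "eligible E f t v" "t < f v" "u \<in> run t" "u \<noteq> v" "\<gamma> u = \<gamma> v"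
    have ru: "u \<in> V" "eligible E f t u" "t < f u" using runI[OF h(4)] by auto
    have na: "u \<notin> ans E v"
    proof
      assume "u \<in> ans E v"
      then have "(u,v) \<in> E\<^sup>+" by (simp add: ans_def)
      then obtain w where "(u,w) \<in> E\<^sup>*" "(w,v) \<in> E" by (meson tranclD2)
      then have "f u \<le> f w" "f w \<le> t" using rt_mono h(2) unfolding eligible_def by auto
      then show False using ru(3) by simp
    qed
    have nd: "u \<notin> des E v"
    proof
      assume "u \<in> des E v"
      then have "(v,u) \<in> E\<^sup>+" by (simp add: des_def)
      then obtain w where "(v,w) \<in> E\<^sup>*" "(w,u) \<in> E" by (meson tranclD2)
      then have "f v \<le> f w" "f w \<le> t" using rt_mono ru(2) unfolding eligible_def by auto
      then show False using h(3) by simp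
    qed
    show "u \<in> par V E \<gamma> v" unfolding par_def using na nd ru(1) h(5,6) by auto
  qed
  have finE: "finite E" using finite_subset[OF EV finite_cartesian_product[OF fV fV]] .
  have wfE: "wf E" using finite_acyclic_wf[OF finE acyc] .
  have crit: "v \<in> V \<Longrightarrow> \<exists>\<pi>. is_path V E \<pi> \<and> last \<pi> = v \<and>
      (\<forall>t. 0 \<le> t \<and> t < f v \<longrightarrow> (\<exists>w\<in>set \<pi>. eligible E f t w \<and> t < f w))" for v
  proof (induction v rule: wf_induct_rule[OF wfE])
    case (1 v)
    define P where "P = {u. (u,v) \<in> E}"
    show ?case
    proof (cases "P = {}")
      case True
      show ?thesis
      proof (intro exI conjI)
        show "is_path V E [v]" using 1 by (simp add: is_path_def)
        show "last [v] = v" by simp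
        show "\<forall>t. 0 \<le> t \<and> t < f v \<longrightarrow> (\<exists>w\<in>set [v]. eligible E f t w \<and> t < f w)"
          using True by (auto simp: eligible_def P_def)
      qed
    next
      case False
      have fP: "finite P" using finite_subset[OF _ fV, of P] EV unfolding P_def by auto
      have "Max (f ` P) \<in> f ` P" using fP False by simp
      then obtain u where u1: "u \<in> P" "f u = Max (f ` P)" by auto
      have u2: "\<forall>u'\<in>P. f u' \<le> f u" using u1(2) fP by simp
      have uV: "u \<in> V" using u1 EV P_def by auto
      obtain \<pi> where p: "is_path V E \<pi>" "last \<pi> = u"
        "\<forall>t. 0 \<le> t \<and> t < f u \<longrightarrow> (\<exists>w\<in>set \<pi>. eligible E f t w \<and> t < f w)"
        using 1(1)[of u] u1(1) uV P_def by auto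
      show ?thesis
      proof (intro exI conjI)
        show "is_path V E (\<pi> @ [v])" using path_snoc[OF p(1)] p(2) u1(1) 1(2) P_def by auto
        show "last (\<pi> @ [v]) = v" by simp
        show "\<forall>t. 0 \<le> t \<and> t < f v \<longrightarrow> (\<exists>w\<in>set (\<pi> @ [v]). eligible E f t w \<and> t < f w)"
        proof (intro allI impI)
          fix t assume t: "0 \<le> t \<and> t < f v"
          show "\<exists>w\<in>set (\<pi> @ [v]). eligible E f t w \<and> t < f w"
          proof (cases "t < f u")
            case True then show ?thesis using p(3) t by auto
          next
            case False
            then have "eligible E f t v" using u2 t unfolding eligible_def P_def by force
            then show ?thesis using t by auto
          qed
        qed
      qed
    qed
  qed
  obtain \<pi> where pi: "is_path V E \<pi>" "last \<pi> = snk"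
    and cov: "\<forall>t. 0 \<le> t \<and> t < f snk \<longrightarrow> (\<exists>w\<in>set \<pi>. eligible E f t w \<and> t < f w)"
    using crit[OF snkV] by auto
  have dist: "distinct \<pi>" using path_distinct acyc pi(1) by blast
  have setV: "set \<pi> \<subseteq> V" using pi(1) by (simp add: is_path_def)
  define R where "R u = {\<tau>. u \<in> run \<tau>}" for u
  define I where "I s = ivs V E \<gamma> \<pi> s" for s
  have IV: "I s \<subseteq> V" for s unfolding I_def ivs_def par_def by auto
  have Rsub: "R u \<subseteq> {0..f u}" for u
    using runI unfolding R_def eligible_def by (auto simp: less_imp_le)
  have Rsets: "R u \<in> sets lborel" for u unfolding R_def using Rmeas by auto
  have Rfin: "emeasure lborel (R u) < \<infinity>" for u
  proof -
    have "emeasure lborel (R u) \<le> emeasure lborel {0..f u}" by (rule emeasure_mono[OF Rsub]) simp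
    also have "\<dots> < \<infinity>" by (cases "0 \<le> f u") auto
    finally show ?thesis .
  qed
  have Rint: "integrable lborel (indicator (R u) :: real \<Rightarrow> real)" for u
    using Rsets Rfin by (simp add: integrable_indicator_iff)
  have Rint_eq: "integral\<^sup>L lborel (indicator (R u) :: real \<Rightarrow> real) = measure lborel (R u)" for u
    using Rsets Rfin by (simp add: Bochner_Integration.integral_indicator)
  have Rmeasure: "measure lborel (R u) \<le> c u" if uV: "u \<in> V" for u
  proof -
    have "R u \<inter> {0..<f u} = R u" using runI unfolding R_def eligible_def by auto
    then have "measure lborel (R u) = e u" using fin[OF uV] unfolding work_def R_def by simp
    then show ?thesis using e_le uV by simp
  qed
  define h where "h t = (\<Sum>w\<in>set \<pi>. indicator (R w) t) + (\<Sum>s\<in>S. \<Sum>u\<in>I s. indicator (R u) t / real (M s))" for t :: real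
  have hint: "integrable lborel h" unfolding h_def
    by (intro Bochner_Integration.integrable_add Bochner_Integration.integrable_sum integrable_divide_zero Rint)
  have hval: "integral\<^sup>L lborel h = (\<Sum>w\<in>set \<pi>. measure lborel (R w)) + (\<Sum>s\<in>S. \<Sum>u\<in>I s. measure lborel (R u) / real (M s))"
    unfolding h_def
    by (simp add: Bochner_Integration.integral_add Bochner_Integration.integrable_sum Rint
        Bochner_Integration.integral_sum integrable_divide_zero Rint_eq)
  have pw: "indicator {0..<f snk} t \<le> h t" for t
  proof (cases "0 \<le> t \<and> t < f snk")
    case False
    then have "indicator {0..<f snk} t = (0::real)" by auto
    moreover have "h t \<ge> 0" unfolding h_def by (intro add_nonneg_nonneg sum_nonneg divide_nonneg_nonneg) auto
    ultimately show ?thesis by simp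
  next
    case True
    then obtain w where w: "w \<in> set \<pi>" "eligible E f t w" "t < f w" using cov by blast
    have wV: "w \<in> V" using w setV by auto
    have n1: "0 \<le> (\<Sum>w\<in>set \<pi>. indicator (R w) t::real)" by (simp add: sum_nonneg)
    have n2: "0 \<le> (\<Sum>s\<in>S. \<Sum>u\<in>I s. indicator (R u) t / real (M s)::real)"
      by (intro sum_nonneg divide_nonneg_nonneg) auto
    have "1 \<le> h t"
    proof (cases "w \<in> run t")
      case True
      have "(1::real) = indicator (R w) t" using True R_def by simp
      also have "\<dots> \<le> (\<Sum>w\<in>set \<pi>. indicator (R w) t)" by (rule member_le_sum) (use w in auto)
      finally show ?thesis unfolding h_def using n2 by linarith
    next
      case False
      then have b: "busy run \<gamma> t (\<gamma> w) = M (\<gamma> w)" using wc wV w by blast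
      define s where "s = \<gamma> w"
      have sS: "s \<in> S" using gS wV s_def by auto
      have Ms: "M s \<ge> 1" using assms(2) sS by auto
      obtain i where i: "i < length \<pi>" "\<pi> ! i = w" using w(1) by (meson in_set_conv_nth)
      have sub: "{u \<in> run t. \<gamma> u = s} \<subseteq> I s \<inter> run t"
      proof
        fix u assume u: "u \<in> {u \<in> run t. \<gamma> u = s}"
        then have "u \<noteq> w" using False by auto
        then have "u \<in> par V E \<gamma> w" using in_par[OF wV w(2) w(3)] u s_def by auto
        then show "u \<in> I s \<inter> run t" using u i s_def unfolding I_def ivs_def by auto
      qed
      have fI: "finite (I s)" using IV fV by (rule finite_subset)
      have "M s = card {u \<in> run t. \<gamma> u = s}" using b unfolding s_def busy_def by simp
      also have "\<dots> \<le> card (I s \<inter> run t)" using sub fI by (intro card_mono) auto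
      finally have c1: "real (M s) \<le> real (card (I s \<inter> run t))" by simp
      have "(\<Sum>u\<in>I s. indicator (R u) t) = (\<Sum>u\<in>I s. indicator (run t) u :: real)"
        unfolding R_def by (intro sum.cong) (auto simp: indicator_def)
      also have "\<dots> = real (card (I s \<inter> run t))" using fI by (simp add: indicator_def sum.If_cases Int_def)
      finally have c2: "(\<Sum>u\<in>I s. indicator (R u) t) = real (card (I s \<inter> run t))" .
      have "(1::real) \<le> (\<Sum>u\<in>I s. indicator (R u) t) / real (M s)"
        using c1 c2 Ms by simp
      also have "\<dots> = (\<Sum>u\<in>I s. indicator (R u) t / real (M s))" by (simp add: sum_divide_distrib)
      also have "\<dots> \<le> (\<Sum>s\<in>S. \<Sum>u\<in>I s. indicator (R u) t / real (M s))"
        by (rule member_le_sum) (use sS fS in \<open>auto intro!: sum_nonneg\<close>)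
      finally show ?thesis unfolding h_def using n1 by linarith
    qed
    then show ?thesis using True by simp
  qed
  have fsnk: "0 \<le> f snk" using fin[OF snkV] unfolding eligible_def by auto
  have "f snk = integral\<^sup>L lborel (indicator {0..<f snk} :: real \<Rightarrow> real)"
    using fsnk by simp
  also have "\<dots> \<le> integral\<^sup>L lborel h"
    by (rule integral_mono[OF _ hint]) (use pw fsnk in \<open>auto simp: integrable_indicator_iff emeasure_lborel_Ico\<close>)
  also have "\<dots> \<le> R_tilde V E S \<gamma> c M \<pi>"
  proof -
    have a: "(\<Sum>w\<in>set \<pi>. measure lborel (R w)) \<le> len c \<pi>"
      unfolding len_def using dist setV
      by (simp add: sum_list_distinct_conv_sum_set, intro sum_mono Rmeasure) auto
    have b: "(\<Sum>s\<in>S. \<Sum>u\<in>I s. measure lborel (R u) / real (M s)) \<le> (\<Sum>s\<in>S. \<Sum>v\<in>I s. c v / real (M s))"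
      using IV by (intro sum_mono divide_right_mono Rmeasure) auto
    show ?thesis unfolding hval R_tilde_def I_def[symmetric] using a b by linarith
  qed
  also have "\<dots> \<le> Max (R_tilde V E S \<gamma> c M ` paths V E)"
    using paths_finite[OF fV acyc] pi(1) by (intro Max_ge) (auto simp: paths_def)
  finally show ?thesis .
qed

end
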